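(* There exists a boolean, exchangeable, two-dimensional random array $\boldsymbol{X}=\langle X_s:s\in\binom{\mathbb{N}}{2}\rangle$ on $\mathbb{N}$ with the following properties. (1) For every $s\in\binom{\mathbb{N}}{2}$, $\mathbb{E}[X_s]=\frac12$. (2) For every distinct $s,t\in\binom{\mathbb{N}}{2}$, $\mathbb{E}[X_sX_t]=\frac14$. (3) For every 2-dimensional box $B$ of $\mathbb{N}$ and every nonempty $G\subseteq B$ with $G\neq B$, $\mathbb{E}[\prod_{s\in G}X_s]=(\frac12)^{|G|}$. (4) For every 2-dimensional box $B$ of $\mathbb{N}$, $\mathbb{E}[\prod_{s\in B}X_s]=\frac32(\frac12)^4$. (5) For every integer $n\geqslant8$, letting $\boldsymbol{X}_n=\langle X_s:s\in\binom{[n]}{2}\rangle$, there exists a translated multilinear polynomial $f\colon\mathbb{R}^{\binom{[n]}{2}}\to\mathbb{R}$ of degree 4 with $\mathbb{E}[f(\boldsymbol{X}_n)]=0$ and $\|f(\boldsymbol{X}_n)\|_{L_\infty}\leqslant1$ such that for every $I\subseteq[n]$ with $|I|\geqslant8$, $\mathbb{P}\big(\big|\mathbb{E}[f(\boldsymbol{X}_n)\,|\,\mathcal{F}_I]\big|\geqslant2^{-11}\big)\geqslant2^{-11}$.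
   Context: $\binom{I}{d}$ is the set of $d$-element subsets of $I$. A $d$-dimensional random array on $\mathbb{N}$ is exchangeable if for every finitely supported permutation $\pi$ of $\mathbb{N}$, $\boldsymbol{X}$ and $\langle X_{\pi(s)}:s\in\binom{\mathbb{N}}{d}\rangle$ have the same law. A 2-dimensional box of $\mathbb{N}$ is a set $\{s\in\binom{\mathbb{N}}{2}:|s\cap H_1|=|s\cap H_2|=1\}$ for 2-element sets $H_1,H_2\subseteq\mathbb{N}$ with $\max(H_1)<\min(H_2)$. $\mathcal{F}_I=\sigma(\{X_s:s\in\binom{I}{2}\})$. A translated multilinear polynomial of degree 4 is a multilinear polynomial of degree 4 plus a constant. *)

theory Defs
  imports "HOL-Probability.Probability"
begin

definition binom :: "'a set \<Rightarrow> nat \<Rightarrow> 'a set set" where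
  "binom I d = {s. s \<subseteq> I \<and> finite s \<and> card s = d}"

definition box2 :: "nat set \<Rightarrow> nat set \<Rightarrow> nat set set" where
  "box2 H1 H2 = {s \<in> binom UNIV 2. card (s \<inter> H1) = 1 \<and> card (s \<inter> H2) = 1}"

definition is_box2 :: "nat set set \<Rightarrow> bool" where
  "is_box2 B \<longleftrightarrow> (\<exists>H1 H2. card H1 = 2 \<and> card H2 = 2 \<and> Max H1 < Min H2 \<and> B = box2 H1 H2)"

definition fin_perm :: "(nat \<Rightarrow> nat) \<Rightarrow> bool" where
  "fin_perm \<pi> \<longleftrightarrow> bij \<pi> \<and> finite {i. \<pi> i \<noteq> i}"

definition array_law :: "'w measure \<Rightarrow> (nat set \<Rightarrow> 'w \<Rightarrow> bool) \<Rightarrow> (nat set \<Rightarrow> bool) measure" where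
  "array_law M X = distr M (Pi\<^sub>M (binom UNIV 2) (\<lambda>_. count_space UNIV))
      (\<lambda>\<omega>. \<lambda>s\<in>binom UNIV 2. X s \<omega>)"

definition exchangeable2 :: "'w measure \<Rightarrow> (nat set \<Rightarrow> 'w \<Rightarrow> bool) \<Rightarrow> bool" where
  "exchangeable2 M X \<longleftrightarrow>
     (\<forall>\<pi>. fin_perm \<pi> \<longrightarrow> array_law M (\<lambda>s. X (\<pi> ` s)) = array_law M X)"

definition tmpoly4 :: "nat \<Rightarrow> real \<Rightarrow> (nat set set \<Rightarrow> real) \<Rightarrow> (nat set \<Rightarrow> real) \<Rightarrow> real" where
  "tmpoly4 n c a x = c + (\<Sum>G\<in>binom (binom {1..n} 2) 4. a G * (\<Prod>s\<in>G. x s))"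

definition has_degree4 :: "nat \<Rightarrow> (nat set set \<Rightarrow> real) \<Rightarrow> bool" where
  "has_degree4 n a \<longleftrightarrow> (\<exists>G\<in>binom (binom {1..n} 2) 4. a G \<noteq> 0)"

definition gen_sigma :: "'w measure \<Rightarrow> (nat set \<Rightarrow> 'w \<Rightarrow> bool) \<Rightarrow> nat set \<Rightarrow> 'w measure" where
  "gen_sigma M X I = sigma (space M) {X s -` A \<inter> space M | s A. s \<in> binom I 2}"

end

theory Submission
  imports Defs
begin



definition coin :: "bool measure" where "coin = measure_pmf (pmf_of_set UNIV)"
definition MM :: "(nat set \<Rightarrow> bool) measure" where "MM = PiM UNIV (\<lambda>_. coin)"
definition XX :: "nat set \<Rightarrow> (nat set \<Rightarrow> bool) \<Rightarrow> bool" where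
  "XX s \<omega> = (if \<omega> {} then \<omega> s else \<omega> {Min s} \<noteq> \<omega> {Max s})"

lemma prob_coin: "prob_space coin" unfolding coin_def by (rule prob_space_measure_pmf)
lemma sets_coin[simp]: "sets coin = UNIV" unfolding coin_def by simp
lemma space_coin[simp]: "space coin = UNIV" unfolding coin_def by simp

interpretation PP: product_prob_space "\<lambda>_. coin" UNIV
  by (simp add: product_prob_space_def product_sigma_finite_def prob_coin prob_space_imp_sigma_finite product_prob_space_axioms_def)

lemma probM: "prob_space MM" unfolding MM_def by (rule PP.P.prob_space_axioms)
lemma space_MM[simp]: "space MM = UNIV" unfolding MM_def by (simp add: space_PiM)
lemma sets_MM: "sets MM = sets (PiM UNIV (\<lambda>_. coin))" unfolding MM_def ..

lemma meas_coord[measurable]: "(\<lambda>\<omega>. \<omega> j) \<in> measurable MM (count_space UNIV)"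
proof -
  have "(\<lambda>\<omega>. \<omega> j) \<in> measurable MM coin" unfolding MM_def by (rule measurable_component_singleton) simp
  then show ?thesis by (simp add: measurable_def)
qed

lemma meas_XX[measurable]: "XX s \<in> measurable MM (count_space UNIV)"
  unfolding XX_def by measurable

lemma int_coin: "(\<integral>b. g b \<partial>coin) = ((g True + g False) / 2 :: real)"
  unfolding coin_def by (simp add: integral_pmf_of_set UNIV_bool)

lemma L3:
  assumes "finite J"
  shows "(\<integral>\<omega>. (\<Prod>j\<in>J. g j (\<omega> j)) \<partial>MM) = (\<Prod>j\<in>J. (g j True + g j False) / 2 :: real)"
proof -
  have "(\<integral>\<omega>. (\<Prod>j\<in>J. g j (\<omega> j)) \<partial>distr MM (PiM J (\<lambda>_. coin)) (\<lambda>x. restrict x J)) = (\<integral>\<omega>. (\<Prod>j\<in>J. g j (\<omega> j)) \<partial>MM)"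
    apply (subst integral_distr)
      apply (simp add: MM_def)
     apply (rule borel_measurable_prod)
    apply (rule measurable_compose[OF measurable_component_singleton[where I=J]])
      apply simp
     apply (simp add: measurable_def)
    apply simp
    done
  then have "(\<integral>\<omega>. (\<Prod>j\<in>J. g j (\<omega> j)) \<partial>MM) = (\<integral>\<omega>. (\<Prod>j\<in>J. g j (\<omega> j)) \<partial>PiM J (\<lambda>_. coin))"
    unfolding MM_def using assms by (subst (asm) PP.distr_PiM_restrict_finite) auto
  also have "\<dots> = (\<Prod>j\<in>J. (\<integral>b. g j b \<partial>coin))"
    apply (rule product_sigma_finite.product_integral_prod)
    apply (simp add: product_sigma_finite_def prob_coin prob_space_imp_sigma_finite)
    apply (rule assms)
    unfolding coin_def apply (rule integrable_measure_pmf_finite) apply simp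
    done
  finally show ?thesis by (simp add: int_coin)
qed




lemma emeasure_coin_single[simp]: "emeasure coin {b} = 1/2"
  unfolding coin_def by (simp add: emeasure_pmf_single divide_ennreal_def)

lemma half_enn: "(1/2::ennreal) = ennreal (1/2)" by (simp add: divide_ennreal_def)

lemma meas5: "(\<lambda>\<omega>. (\<omega> j1, \<omega> j2, \<omega> j3, \<omega> j4, \<omega> j5)) \<in> measurable MM (count_space UNIV)"
proof (subst measurable_count_space_eq2_countable, safe)
  fix a :: "bool \<times> bool \<times> bool \<times> bool \<times> bool"
  obtain a1 a2 a3 a4 a5 where a: "a = (a1,a2,a3,a4,a5)" by (cases a) auto
  have "(\<lambda>\<omega>. (\<omega> j1, \<omega> j2, \<omega> j3, \<omega> j4, \<omega> j5)) -` {a} \<inter> space MM = {\<omega>\<in>space MM. \<omega> j1 = a1 \<and> \<omega> j2 = a2 \<and> \<omega> j3 = a3 \<and> \<omega> j4 = a4 \<and> \<omega> j5 = a5}"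
    by (auto simp: a)
  also have "\<dots> \<in> sets MM" by measurable
  finally show "(\<lambda>\<omega>. (\<omega> j1, \<omega> j2, \<omega> j3, \<omega> j4, \<omega> j5)) -` {a} \<inter> space MM \<in> sets MM" .
qed auto

lemma distr5:
  assumes d: "distinct [j1,j2,j3,j4,j5]"
  shows "distr MM (count_space UNIV) (\<lambda>\<omega>. (\<omega> j1, \<omega> j2, \<omega> j3, \<omega> j4, \<omega> j5)) = measure_pmf (pmf_of_set UNIV)"
proof (rule measure_eqI_countable[where A=UNIV])
  fix a :: "bool \<times> bool \<times> bool \<times> bool \<times> bool"
  obtain a1 a2 a3 a4 a5 where a: "a = (a1,a2,a3,a4,a5)" by (cases a) auto
  define J where "J = {j1,j2,j3,j4,j5}"
  define X where "X j = {if j = j1 then a1 else if j = j2 then a2 else if j = j3 then a3 else if j = j4 then a4 else a5}" for j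
  from d have ne: "j1 \<noteq> j2" "j1 \<noteq> j3" "j1 \<noteq> j4" "j1 \<noteq> j5" "j2 \<noteq> j3" "j2 \<noteq> j4" "j2 \<noteq> j5" "j3 \<noteq> j4" "j3 \<noteq> j5" "j4 \<noteq> j5" by auto
  have pre: "(\<lambda>\<omega>. (\<omega> j1, \<omega> j2, \<omega> j3, \<omega> j4, \<omega> j5)) -` {a} \<inter> space MM = {x\<in>space (PiM UNIV (\<lambda>_. coin)). \<forall>i\<in>J. x i \<in> X i}"
    unfolding a J_def X_def space_PiM using ne by (auto simp: ne ne[symmetric])
  have "emeasure (distr MM (count_space UNIV) (\<lambda>\<omega>. (\<omega> j1, \<omega> j2, \<omega> j3, \<omega> j4, \<omega> j5))) {a}
      = emeasure MM ((\<lambda>\<omega>. (\<omega> j1, \<omega> j2, \<omega> j3, \<omega> j4, \<omega> j5)) -` {a} \<inter> space MM)"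
    by (rule emeasure_distr[OF meas5]) simp
  also have "\<dots> = (\<Prod>i\<in>J. emeasure coin (X i))"
    unfolding pre by (unfold MM_def, rule PP.emeasure_PiM_Collect) (auto simp: J_def)
  also have "\<dots> = 1 / 2 * (1 / 2 * (1 / 2 * (1 / 2 * (1 / 2))))"
    unfolding J_def X_def using ne by (simp add: ne ne[symmetric])
  also have "\<dots> = emeasure (measure_pmf (pmf_of_set UNIV)) {a}"
    unfolding half_enn by (simp add: emeasure_pmf_single card_UNIV_bool ennreal_mult[symmetric] del: ennreal_half)
  finally show "emeasure (distr MM (count_space UNIV) (\<lambda>\<omega>. (\<omega> j1, \<omega> j2, \<omega> j3, \<omega> j4, \<omega> j5))) {a} = emeasure (measure_pmf (pmf_of_set UNIV)) {a}" .
qed auto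

lemma T5:
  assumes d: "distinct [j1,j2,j3,j4,j5]"
  shows "(\<integral>\<omega>. \<phi> (\<omega> j1) (\<omega> j2) (\<omega> j3) (\<omega> j4) (\<omega> j5) \<partial>MM) =
    (\<Sum>x1\<in>UNIV. \<Sum>x2\<in>UNIV. \<Sum>x3\<in>UNIV. \<Sum>x4\<in>UNIV. \<Sum>x5\<in>UNIV. \<phi> x1 x2 x3 x4 x5) / (32::real)"
proof -
  let ?T = "\<lambda>\<omega>. (\<omega> j1, \<omega> j2, \<omega> j3, \<omega> j4, \<omega> j5)"
  let ?p = "\<lambda>(x1,x2,x3,x4,x5). \<phi> x1 x2 x3 x4 x5"
  have "(\<integral>x. ?p x \<partial>distr MM (count_space UNIV) ?T) = (\<integral>\<omega>. ?p (?T \<omega>) \<partial>MM)"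
    by (rule integral_distr[OF meas5]) simp
  then have "(\<integral>\<omega>. \<phi> (\<omega> j1) (\<omega> j2) (\<omega> j3) (\<omega> j4) (\<omega> j5) \<partial>MM) = (\<integral>x. ?p x \<partial>measure_pmf (pmf_of_set UNIV))"
    by (simp only: distr5[OF d] split_conv)
  also have "\<dots> = (\<Sum>x\<in>UNIV. ?p x) / 32"
    by (simp add: integral_pmf_of_set card_UNIV_bool)
  also have "(\<Sum>x\<in>UNIV. ?p x) = (\<Sum>x1\<in>UNIV. \<Sum>x2\<in>UNIV. \<Sum>x3\<in>UNIV. \<Sum>x4\<in>UNIV. \<Sum>x5\<in>UNIV. \<phi> x1 x2 x3 x4 x5)"
    apply (subst UNIV_Times_UNIV[symmetric])+
    apply (simp only: sum.cartesian_product[symmetric] split_beta fst_conv snd_conv)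
    done
  finally show ?thesis .
qed




lemma intg: "(f::_\<Rightarrow>real) \<in> borel_measurable MM \<Longrightarrow> (\<And>\<omega>. \<bar>f \<omega>\<bar> \<le> B) \<Longrightarrow> integrable MM f"
  using probM by (intro finite_measure.integrable_const_bound[where B=B]) (auto simp: prob_space_def)

lemma binom2_E: "(s::nat set) \<in> binom UNIV 2 \<Longrightarrow> \<exists>a b. a < b \<and> s = {a,b}"
proof -
  assume "s \<in> binom UNIV 2"
  then obtain x y where xy: "s = {x,y}" "x \<noteq> y" unfolding binom_def by (auto simp: card_2_iff)
  show ?thesis
  proof (cases "x < y")
    case True then show ?thesis using xy by blast
  next
    case False then have "y < x" using xy by auto
    then show ?thesis using xy by (intro exI[of _ y] exI[of _ x]) auto
  qed
qed

lemma Min_Max2[simp]: "(a::nat) < b \<Longrightarrow> Min {a,b} = a \<and> Max {a,b} = b"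
  by auto

lemma pads: "card s \<le> 2 \<Longrightarrow> s \<noteq> {0::nat,1,2} \<and> s \<noteq> {0,1,3}"
  by auto

lemma Xprod:
  assumes G: "finite G" "G \<subseteq> binom UNIV 2"
  shows "(\<integral>\<omega>. (\<Prod>s\<in>G. of_bool (XX s \<omega>)) \<partial>MM) = (1/2::real)^(card G + 1) +
    (\<integral>\<omega>. of_bool (\<not> \<omega> {}) * (\<Prod>s\<in>G. of_bool (\<omega> {Min s} \<noteq> \<omega> {Max s})) \<partial>MM)"
proof -
  have e: "{} \<notin> G" using G unfolding binom_def by auto
  have pw: "(\<Prod>s\<in>G. of_bool (XX s \<omega>)) = (\<Prod>j\<in>insert {} G. of_bool (\<omega> j)) +
     of_bool (\<not> \<omega> {}) * (\<Prod>s\<in>G. of_bool (\<omega> {Min s} \<noteq> \<omega> {Max s}) :: real)" for \<omega>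
    using e G(1) by (cases "\<omega> {}") (simp_all add: XX_def)
  have "(\<integral>\<omega>. (\<Prod>s\<in>G. of_bool (XX s \<omega>)) \<partial>MM) = (\<integral>\<omega>. (\<Prod>j\<in>insert {} G. of_bool (\<omega> j)) +
     of_bool (\<not> \<omega> {}) * (\<Prod>s\<in>G. of_bool (\<omega> {Min s} \<noteq> \<omega> {Max s}) :: real) \<partial>MM)"
    by (intro Bochner_Integration.integral_cong refl) (simp only: pw)
  also have "\<dots> = (\<integral>\<omega>. (\<Prod>j\<in>insert {} G. of_bool (\<omega> j)) \<partial>MM) +
    (\<integral>\<omega>. of_bool (\<not> \<omega> {}) * (\<Prod>s\<in>G. of_bool (\<omega> {Min s} \<noteq> \<omega> {Max s})) \<partial>MM)"
    by (rule Bochner_Integration.integral_add; rule intg[where B=1]; (measurable)?; simp add: prod_le_1 abs_prod)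
  also have "(\<integral>\<omega>. (\<Prod>j\<in>insert {} G. of_bool (\<omega> j)) \<partial>MM) = (\<Prod>j\<in>insert {} G. (of_bool True + of_bool False) / 2 :: real)"
    using L3[of "insert {} G" "\<lambda>_. of_bool"] G(1) by simp
  also have "\<dots> = (1/2)^(card G + 1)" using e G(1) by simp
  finally show ?thesis .
qed

lemma pad12[simp]: "{0::nat,Suc 0,2} \<noteq> {0,Suc 0,3}"
proof
  assume "{0::nat,Suc 0,2} = {0,Suc 0,3}"
  then have "(3::nat) \<in> {0,Suc 0,2}" by auto
  then show False by simp
qed

lemma xor1: assumes "a \<noteq> b"
  shows "(\<integral>\<omega>. of_bool (\<not> \<omega> {}) * of_bool (\<omega> {a} \<noteq> \<omega> {b}) \<partial>MM) = (1/4::real)"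
  using T5[of "{}" "{a}" "{b}" "{0,1,2}" "{0,1,3}" "\<lambda>x1 x2 x3 x4 x5. of_bool (\<not> x1) * of_bool (x2 \<noteq> x3)"] assms
  by (simp add: UNIV_bool)

lemma xor2s: assumes "distinct [u,v,w]"
  shows "(\<integral>\<omega>. of_bool (\<not> \<omega> {}) * (of_bool (\<omega> {u} \<noteq> \<omega> {v}) * of_bool (\<omega> {u} \<noteq> \<omega> {w})) \<partial>MM) = (1/8::real)"
  using T5[of "{}" "{u}" "{v}" "{w}" "{0,1,2}" "\<lambda>x1 x2 x3 x4 x5. of_bool (\<not> x1) * (of_bool (x2 \<noteq> x3) * of_bool (x2 \<noteq> x4))"] assms
  by (simp add: UNIV_bool)

lemma xor2d: assumes "distinct [a,b,c,d]"
  shows "(\<integral>\<omega>. of_bool (\<not> \<omega> {}) * (of_bool (\<omega> {a} \<noteq> \<omega> {b}) * of_bool (\<omega> {c} \<noteq> \<omega> {d})) \<partial>MM) = (1/8::real)"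
  using T5[of "{}" "{a}" "{b}" "{c}" "{d}" "\<lambda>x1 x2 x3 x4 x5. of_bool (\<not> x1) * (of_bool (x2 \<noteq> x3) * of_bool (x4 \<noteq> x5))"] assms
  by (simp add: UNIV_bool)

lemma xorbox: assumes "distinct [a,b,c,d]"
  shows "(\<integral>\<omega>. of_bool (\<not> \<omega> {}) * ((if g1 then of_bool (\<omega> {a} \<noteq> \<omega> {c}) else 1) * ((if g2 then of_bool (\<omega> {a} \<noteq> \<omega> {d}) else 1) *
     ((if g3 then of_bool (\<omega> {b} \<noteq> \<omega> {c}) else 1) * (if g4 then of_bool (\<omega> {b} \<noteq> \<omega> {d}) else 1)))) \<partial>MM) =
   (if g1 \<and> g2 \<and> g3 \<and> g4 then 1/16 else (1/2::real) ^ (of_bool g1 + of_bool g2 + of_bool g3 + of_bool g4 + 1))"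
  using T5[of "{}" "{a}" "{b}" "{c}" "{d}" "\<lambda>x1 x2 x3 x4 x5. of_bool (\<not> x1) * ((if g1 then of_bool (x2 \<noteq> x4) else 1) * ((if g2 then of_bool (x2 \<noteq> x5) else 1) *
     ((if g3 then of_bool (x3 \<noteq> x4) else 1) * (if g4 then of_bool (x3 \<noteq> x5) else 1))))"] assms
  by (cases g1; cases g2; cases g3; cases g4; simp add: UNIV_bool)




lemma E1: assumes "s \<in> binom UNIV 2"
  shows "(\<integral>\<omega>. of_bool (XX s \<omega>) \<partial>MM) = (1/2::real)"
proof -
  obtain a b where ab: "a < b" "s = {a,b}" using binom2_E[OF assms] by blast
  have "(\<integral>\<omega>. of_bool (XX s \<omega>) \<partial>MM) = (\<integral>\<omega>. (\<Prod>u\<in>{s}. of_bool (XX u \<omega>)) \<partial>MM)" by simp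
  also have "\<dots> = (1/2::real)^2 + (\<integral>\<omega>. of_bool (\<not> \<omega> {}) * of_bool (\<omega> {a} \<noteq> \<omega> {b}) \<partial>MM)"
    using Xprod[of "{s}"] assms ab by (simp add: power2_eq_square)
  also have "\<dots> = 1/2" using xor1[of a b] ab by (simp add: power2_eq_square)
  finally show ?thesis .
qed

lemma xor2: assumes "{a,b} \<noteq> {c,d}" "a \<noteq> b" "c \<noteq> d"
  shows "(\<integral>\<omega>. of_bool (\<not> \<omega> {}) * (of_bool (\<omega> {a} \<noteq> \<omega> {b}) * of_bool (\<omega> {c} \<noteq> \<omega> {d})) \<partial>MM) = (1/8::real)"
proof -
  consider "distinct [a,b,c,d]" | "a = c" | "a = d" | "b = c" | "b = d" using assms by auto
  then show ?thesis
  proof cases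
    case 1 then show ?thesis by (rule xor2d)
  next
    case 2 then show ?thesis using xor2s[of a b d] assms by auto
  next
    case 3
    then have dd: "distinct [a,b,c]" using assms by auto
    have e: "(\<lambda>\<omega>. of_bool (\<not> \<omega> {}) * (of_bool (\<omega> {a} \<noteq> \<omega> {b}) * of_bool (\<omega> {c} \<noteq> \<omega> {d})) :: real) = (\<lambda>\<omega>. of_bool (\<not> \<omega> {}) * (of_bool (\<omega> {a} \<noteq> \<omega> {b}) * of_bool (\<omega> {a} \<noteq> \<omega> {c})))"
      using 3 by (intro ext) auto
    show ?thesis unfolding e by (rule xor2s[OF dd])
  next
    case 4
    then have dd: "distinct [b,a,d]" using assms by auto
    have e: "(\<lambda>\<omega>. of_bool (\<not> \<omega> {}) * (of_bool (\<omega> {a} \<noteq> \<omega> {b}) * of_bool (\<omega> {c} \<noteq> \<omega> {d})) :: real) = (\<lambda>\<omega>. of_bool (\<not> \<omega> {}) * (of_bool (\<omega> {b} \<noteq> \<omega> {a}) * of_bool (\<omega> {b} \<noteq> \<omega> {d})))"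
      using 4 by (intro ext) auto
    show ?thesis unfolding e by (rule xor2s[OF dd])
  next
    case 5
    then have dd: "distinct [b,a,c]" using assms by auto
    have e: "(\<lambda>\<omega>. of_bool (\<not> \<omega> {}) * (of_bool (\<omega> {a} \<noteq> \<omega> {b}) * of_bool (\<omega> {c} \<noteq> \<omega> {d})) :: real) = (\<lambda>\<omega>. of_bool (\<not> \<omega> {}) * (of_bool (\<omega> {b} \<noteq> \<omega> {a}) * of_bool (\<omega> {b} \<noteq> \<omega> {c})))"
      using 5 by (intro ext) auto
    show ?thesis unfolding e by (rule xor2s[OF dd])
  qed
qed

lemma E2: assumes "s \<in> binom UNIV 2" "t \<in> binom UNIV 2" "s \<noteq> t"
  shows "(\<integral>\<omega>. of_bool (XX s \<omega>) * of_bool (XX t \<omega>) \<partial>MM) = (1/4::real)"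
proof -
  obtain a b where ab: "a < b" "s = {a,b}" using binom2_E[OF assms(1)] by blast
  obtain c d where cd: "c < d" "t = {c,d}" using binom2_E[OF assms(2)] by blast
  have "(\<integral>\<omega>. of_bool (XX s \<omega>) * of_bool (XX t \<omega>) \<partial>MM) = (\<integral>\<omega>. (\<Prod>u\<in>{s,t}. of_bool (XX u \<omega>)) \<partial>MM)"
    using assms(3) by simp
  also have "\<dots> = (1/2::real)^3 + (\<integral>\<omega>. of_bool (\<not> \<omega> {}) * (of_bool (\<omega> {a} \<noteq> \<omega> {b}) * of_bool (\<omega> {c} \<noteq> \<omega> {d})) \<partial>MM)"
    using Xprod[of "{s,t}"] assms ab cd by (simp add: power3_eq_cube)
  also have "\<dots> = 1/4" using xor2[of a b c d] ab cd assms(3) by (simp add: power3_eq_cube)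
  finally show ?thesis .
qed

lemma box_struct: assumes "is_box2 B"
  shows "\<exists>a b c d. a < b \<and> b < c \<and> c < d \<and> B = {{a,c},{a,d},{b,c},{b,d}}"
proof -
  obtain H1 H2 where H: "card H1 = 2" "card H2 = 2" "Max H1 < Min H2" "B = box2 H1 H2"
    using assms unfolding is_box2_def by blast
  have "H1 \<in> binom UNIV 2" "H2 \<in> binom UNIV 2" using H unfolding binom_def by (auto intro: card_ge_0_finite)
  then obtain a b c d where ab: "a < b" "H1 = {a,b}" and cd: "c < d" "H2 = {c,d}"
    using binom2_E by metis
  have bc: "b < c" using H(3) ab cd by simp
  have "box2 H1 H2 = {{a,c},{a,d},{b,c},{b,d}}"
  proof
    show "{{a,c},{a,d},{b,c},{b,d}} \<subseteq> box2 H1 H2"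
      using ab cd bc unfolding box2_def binom_def by auto
  next
    show "box2 H1 H2 \<subseteq> {{a,c},{a,d},{b,c},{b,d}}"
    proof
      fix s assume s: "s \<in> box2 H1 H2"
      then have sb: "s \<in> binom UNIV 2" and c1: "card (s \<inter> H1) = 1" and c2: "card (s \<inter> H2) = 1"
        unfolding box2_def by auto
      obtain x y where xy: "x < y" "s = {x,y}" using binom2_E[OF sb] by blast
      obtain p where p: "s \<inter> H1 = {p}" using c1 card_1_singletonE by blast
      obtain q where q: "s \<inter> H2 = {q}" using c2 card_1_singletonE by blast
      have pq: "p \<in> {a,b}" "q \<in> {c,d}" "p \<in> s" "q \<in> s" using p q ab cd by auto
      have "p \<noteq> q" using pq ab cd bc by auto
      then have "s = {p,q}" using pq xy by auto
      then show "s \<in> {{a,c},{a,d},{b,c},{b,d}}" using pq by auto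
    qed
  qed
  then show ?thesis using ab cd bc H(4) by blast
qed

lemma Ebox:
  assumes o: "a < b" "b < c" "c < d" and B: "B = {{a,c},{a,d},{b,c},{b,d}}" and G: "G \<subseteq> B"
  shows "(\<integral>\<omega>. (\<Prod>s\<in>G. of_bool (XX s \<omega>)) \<partial>MM) = (1/2::real)^(card G + 1) + (if G = B then 1/16 else (1/2)^(card G + 1))"
proof -
  have fB: "finite B" using B by simp
  have fG: "finite G" using G fB finite_subset by blast
  have Gb: "G \<subseteq> binom UNIV 2" using G B o unfolding binom_def by auto
  let ?g1 = "{a,c} \<in> G" let ?g2 = "{a,d} \<in> G" let ?g3 = "{b,c} \<in> G" let ?g4 = "{b,d} \<in> G"
  have ne: "{a,c} \<noteq> {a,d}" "{a,c} \<noteq> {b,c}" "{a,c} \<noteq> {b,d}" "{a,d} \<noteq> {b,c}" "{a,d} \<noteq> {b,d}" "{b,c} \<noteq> {b,d}"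
    using o by (auto simp: doubleton_eq_iff)
  have GB: "B \<inter> G = G" using G by blast
  have pw: "(\<Prod>s\<in>G. of_bool (\<omega> {Min s} \<noteq> \<omega> {Max s})) =
    ((if ?g1 then of_bool (\<omega> {a} \<noteq> \<omega> {c}) else 1) * ((if ?g2 then of_bool (\<omega> {a} \<noteq> \<omega> {d}) else 1) *
     ((if ?g3 then of_bool (\<omega> {b} \<noteq> \<omega> {c}) else 1) * (if ?g4 then of_bool (\<omega> {b} \<noteq> \<omega> {d}) else (1::real)))))" for \<omega> :: "nat set \<Rightarrow> bool"
  proof -
    have "(\<Prod>s\<in>G. of_bool (\<omega> {Min s} \<noteq> \<omega> {Max s})) = (\<Prod>s\<in>B \<inter> G. of_bool (\<omega> {Min s} \<noteq> \<omega> {Max s}) :: real)"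
      using GB by simp
    also have "\<dots> = (\<Prod>s\<in>B. if s \<in> G then of_bool (\<omega> {Min s} \<noteq> \<omega> {Max s}) else 1)"
      using fB by (rule prod.inter_restrict)
    also have "\<dots> = ((if ?g1 then of_bool (\<omega> {a} \<noteq> \<omega> {c}) else 1) * ((if ?g2 then of_bool (\<omega> {a} \<noteq> \<omega> {d}) else 1) *
     ((if ?g3 then of_bool (\<omega> {b} \<noteq> \<omega> {c}) else 1) * (if ?g4 then of_bool (\<omega> {b} \<noteq> \<omega> {d}) else (1::real)))))"
      using ne o unfolding B by simp
    finally show ?thesis .
  qed
  have cG: "card G = of_bool ?g1 + of_bool ?g2 + of_bool ?g3 + of_bool ?g4"
  proof -
    have "card G = card (B \<inter> G)" using GB by simp
    also have "\<dots> = (\<Sum>s\<in>B \<inter> G. 1)" by simp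
    also have "\<dots> = (\<Sum>s\<in>B. if s \<in> G then 1 else 0)" using fB by (rule sum.inter_restrict)
    also have "\<dots> = of_bool ?g1 + of_bool ?g2 + of_bool ?g3 + of_bool ?g4"
      using ne o unfolding B by simp
    finally show ?thesis .
  qed
  have GBiff: "G = B \<longleftrightarrow> ?g1 \<and> ?g2 \<and> ?g3 \<and> ?g4" using G B by auto
  have "(\<integral>\<omega>. (\<Prod>s\<in>G. of_bool (XX s \<omega>)) \<partial>MM) = (1/2::real)^(card G + 1) +
    (\<integral>\<omega>. of_bool (\<not> \<omega> {}) * (\<Prod>s\<in>G. of_bool (\<omega> {Min s} \<noteq> \<omega> {Max s})) \<partial>MM)"
    by (rule Xprod[OF fG Gb])
  also have "(\<integral>\<omega>. of_bool (\<not> \<omega> {}) * (\<Prod>s\<in>G. of_bool (\<omega> {Min s} \<noteq> \<omega> {Max s})) \<partial>MM) =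
    (\<integral>\<omega>. (of_bool::_\<Rightarrow>real) (\<not> \<omega> {}) * ((if ?g1 then of_bool (\<omega> {a} \<noteq> \<omega> {c}) else 1) * ((if ?g2 then of_bool (\<omega> {a} \<noteq> \<omega> {d}) else 1) *
     ((if ?g3 then of_bool (\<omega> {b} \<noteq> \<omega> {c}) else 1) * (if ?g4 then of_bool (\<omega> {b} \<noteq> \<omega> {d}) else 1)))) \<partial>MM)"
    by (rule Bochner_Integration.integral_cong[OF refl]) (simp only: pw)
  also have "\<dots> = (if ?g1 \<and> ?g2 \<and> ?g3 \<and> ?g4 then 1/16 else (1/2::real) ^ (of_bool ?g1 + of_bool ?g2 + of_bool ?g3 + of_bool ?g4 + 1))"
    by (rule xorbox) (use o in auto)
  finally show ?thesis unfolding GBiff cG by simp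
qed

lemma E3: assumes "is_box2 B" "G \<subseteq> B" "G \<noteq> B"
  shows "(\<integral>\<omega>. (\<Prod>s\<in>G. of_bool (XX s \<omega>)) \<partial>MM) = (1/2::real)^(card G)"
proof -
  obtain a b c d where o: "a < b" "b < c" "c < d" "B = {{a,c},{a,d},{b,c},{b,d}}" using box_struct[OF assms(1)] by blast
  show ?thesis using Ebox[OF o assms(2)] assms(3) by simp
qed

lemma E4: assumes "is_box2 B"
  shows "(\<integral>\<omega>. (\<Prod>s\<in>B. of_bool (XX s \<omega>)) \<partial>MM) = 3/2 * (1/2::real)^4"
proof -
  obtain a b c d where o: "a < b" "b < c" "c < d" "B = {{a,c},{a,d},{b,c},{b,d}}" using box_struct[OF assms(1)] by blast
  have ne: "{a,c} \<noteq> {a,d}" "{a,c} \<noteq> {b,c}" "{a,c} \<noteq> {b,d}" "{a,d} \<noteq> {b,c}" "{a,d} \<noteq> {b,d}" "{b,c} \<noteq> {b,d}"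
    using o by (auto simp: doubleton_eq_iff)
  have "card B = 4" using ne o(4) by simp
  then show ?thesis using Ebox[OF o order_refl] by (simp add: power_divide)
qed




lemma XX_perm:
  assumes inj: "inj \<pi>" and s: "s \<in> binom UNIV 2"
  shows "XX (\<pi> ` s) \<omega> = XX s (\<lambda>A. \<omega> (\<pi> ` A))"
proof -
  obtain a b where ab: "a < b" "s = {a,b}" using binom2_E[OF s] by blast
  have ne: "\<pi> a \<noteq> \<pi> b" using inj ab by (metis inj_eq less_irrefl)
  show ?thesis
  proof (cases "\<pi> a < \<pi> b")
    case True then show ?thesis using ab by (simp add: XX_def)
  next
    case False then have "\<pi> b < \<pi> a" using ne by simp
    then show ?thesis using ab by (auto simp add: XX_def insert_commute)
  qed
qed

lemma exch: "exchangeable2 MM XX"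
  unfolding exchangeable2_def
proof (intro allI impI)
  fix \<pi> :: "nat \<Rightarrow> nat" assume "fin_perm \<pi>"
  then have inj: "inj \<pi>" unfolding fin_perm_def bij_def by simp
  let ?\<sigma> = "\<lambda>A. \<pi> ` A"
  have injs: "inj ?\<sigma>" using inj by (simp add: inj_def inj_image_eq_iff)
  let ?T = "\<lambda>\<omega>. \<lambda>n\<in>UNIV. \<omega> (?\<sigma> n)"
  let ?P = "Pi\<^sub>M (binom UNIV 2) (\<lambda>_. count_space (UNIV::bool set))"
  let ?F = "\<lambda>\<omega>. \<lambda>s\<in>binom UNIV 2. XX s \<omega>"
  have Tm: "?T \<in> measurable MM MM"
    unfolding MM_def by (intro measurable_restrict measurable_component_singleton) auto
  have Fm: "?F \<in> measurable MM ?P"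
    by (intro measurable_restrict) simp
  have dT: "distr MM MM ?T = MM"
    unfolding MM_def using distr_PiM_reindex[of UNIV "\<lambda>_. coin" ?\<sigma> UNIV] injs prob_coin by simp
  have eq: "(\<lambda>\<omega>. \<lambda>s\<in>binom UNIV 2. XX (\<pi> ` s) \<omega>) = (\<lambda>\<omega>. ?F (?T \<omega>))"
    by (intro ext) (auto simp: restrict_def XX_perm[OF inj])
  have "array_law MM (\<lambda>s. XX (\<pi> ` s)) = distr MM ?P (\<lambda>\<omega>. ?F (?T \<omega>))"
    unfolding array_law_def eq ..
  also have "\<dots> = distr (distr MM MM ?T) ?P ?F"
    by (rule distr_distr[OF Fm Tm, symmetric, unfolded comp_def])
  also have "\<dots> = array_law MM XX" unfolding dT array_law_def ..
  finally show "array_law MM (\<lambda>s. XX (\<pi> ` s)) = array_law MM XX" .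
qed




definition FF :: "nat set \<Rightarrow> (nat set \<Rightarrow> bool) measure" where "FF I = gen_sigma MM XX I"

lemma gens_sub: "{XX s -` A \<inter> space MM | s A. s \<in> binom I 2} \<subseteq> sets MM"
proof safe
  fix s A show "XX s -` A \<inter> space MM \<in> sets MM" by (rule measurable_sets[OF meas_XX]) simp
qed

lemma space_FF[simp]: "space (FF I) = UNIV"
  unfolding FF_def gen_sigma_def using gens_sub[of I] sets.space_closed[of MM]
  by (subst space_measure_of_conv) auto

lemma sets_FF: "sets (FF I) = sigma_sets UNIV {XX s -` A \<inter> space MM | s A. s \<in> binom I 2}"
  unfolding FF_def gen_sigma_def using gens_sub[of I] sets.space_closed[of MM]
  by (subst sets_measure_of) auto

lemma subalg_FF: "subalgebra MM (FF I)"
  unfolding subalgebra_def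
proof
  show "space (FF I) = space MM" by simp
  show "sets (FF I) \<subseteq> sets MM"
    unfolding sets_FF using sets.sigma_sets_subset[OF gens_sub[of I]] by simp
qed

lemma sfs: "sigma_finite_subalgebra MM (FF I)"
  apply (rule finite_measure_subalgebra_is_sigma_finite)
  unfolding finite_measure_subalgebra_def finite_measure_subalgebra_axioms_def
  using probM subalg_FF by (auto simp: prob_space_def)

lemma XX_meas_F: "s \<in> binom I 2 \<Longrightarrow> XX s \<in> measurable (FF I) (count_space UNIV)"
  by (rule measurableI) (auto simp: sets_FF)

lemma indep_coords: "prob_space.indep_vars MM (\<lambda>_. coin) (\<lambda>i \<omega>. \<omega> i) UNIV"
proof -
  interpret prob_space MM by (rule probM)
  have rv: "random_variable coin (\<lambda>\<omega>. \<omega> i)" for i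
    unfolding MM_def by (rule measurable_component_singleton) simp
  have "distr MM (Pi\<^sub>M UNIV (\<lambda>i. coin)) (\<lambda>x. \<lambda>i\<in>UNIV. x i) = MM"
    unfolding MM_def by (simp add: distr_id2 restrict_UNIV)
  also have "\<dots> = (\<Pi>\<^sub>M i\<in>UNIV. distr MM coin (\<lambda>\<omega>. \<omega> i))"
    unfolding MM_def by (simp add: PP.PiM_component)
  finally show ?thesis by (subst indep_vars_iff_distr_eq_PiM) (auto simp: rv)
qed

lemma meas_coord_sub: "j \<in> C \<Longrightarrow> (\<lambda>x. x j) \<in> measurable (PiM C (\<lambda>_. coin)) (count_space UNIV)"
proof -
  assume "j \<in> C"
  then have "(\<lambda>x. x j) \<in> measurable (PiM C (\<lambda>_. coin)) coin" by (rule measurable_component_singleton)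
  then show ?thesis by (simp add: measurable_def)
qed

lemma card_ne2: "card {} \<noteq> 2" "card {x} \<noteq> 2" by auto

lemma condk:
  assumes C2: "finite C2" "C2 \<inter> binom I 2 = {}" "C2 \<subseteq> binom UNIV 2"
  shows "AE \<omega> in MM. real_cond_exp MM (FF I) (\<lambda>\<omega>. \<Prod>s\<in>C2. of_bool (\<omega> s)) \<omega> = (1/2::real)^card C2"
proof -
  interpret sigma_finite_subalgebra MM "FF I" by (rule sfs)
  interpret P: prob_space MM by (rule probM)
  define C1 where "C1 = UNIV - C2"
  let ?Z1 = "\<lambda>\<omega>. restrict \<omega> C1"
  let ?Z2 = "\<lambda>\<omega>. restrict \<omega> C2"
  let ?P1 = "PiM C1 (\<lambda>_. coin)"
  let ?P2 = "PiM C2 (\<lambda>_. coin)"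
  have Z1s: "?Z1 \<in> UNIV \<rightarrow> space ?P1" by (simp add: space_PiM)
  have ind: "P.indep_var ?P1 ?Z1 ?P2 ?Z2"
    using P.indep_var_restrict[OF indep_coords, of C1 C2] C1_def by auto
  define k where "k \<omega> = (\<Prod>s\<in>C2. of_bool (\<omega> s) :: real)" for \<omega> :: "nat set \<Rightarrow> bool"
  have km: "k \<in> borel_measurable MM" unfolding k_def by measurable
  have km2: "k \<in> borel_measurable ?P2" unfolding k_def
    by (intro borel_measurable_prod) (auto intro: measurable_compose[OF meas_coord_sub])
  have kZ: "k (?Z2 \<omega>) = k \<omega>" for \<omega> unfolding k_def by simp
  have kint: "integrable MM k" by (rule intg[OF km, where B=1]) (simp add: k_def prod_le_1 abs_prod)
  have Ek: "(\<integral>\<omega>. k \<omega> \<partial>MM) = (1/2)^card C2"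
    unfolding k_def using L3[OF C2(1), of "\<lambda>_. of_bool"] by simp
  have gens: "{XX s -` A \<inter> space MM | s A. s \<in> binom I 2} \<subseteq> sets (vimage_algebra UNIV ?Z1 ?P1)"
  proof safe
    fix s A assume s: "s \<in> binom I 2"
    obtain a b where ab: "a < b" "s = {a,b}" using binom2_E[of s] s unfolding binom_def by auto
    have inC1: "{} \<in> C1" "s \<in> C1" "{a} \<in> C1" "{b} \<in> C1"
    proof -
      have nb: "card x = 2" if "x \<in> C2" for x using C2(3) that unfolding binom_def by auto
      have "s \<notin> C2" using C2(2) s by blast
      then show "{} \<in> C1" "s \<in> C1" "{a} \<in> C1" "{b} \<in> C1"
        unfolding C1_def using nb[of "{}"] nb[of "{a}"] nb[of "{b}"] by auto
    qed
    note [measurable] = meas_coord_sub[OF inC1(1)] meas_coord_sub[OF inC1(2)] meas_coord_sub[OF inC1(3)] meas_coord_sub[OF inC1(4)]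
    have XXe: "XX s = (\<lambda>x. if x {} then x s else x {a} \<noteq> x {b})" using ab by (auto simp: XX_def fun_eq_iff)
    have XXm: "XX s \<in> measurable ?P1 (count_space UNIV)"
      unfolding XXe by measurable
    have "XX s -` A \<inter> space MM = ?Z1 -` (XX s -` A \<inter> space ?P1) \<inter> UNIV"
    proof -
      have "XX s (restrict \<omega> C1) = XX s \<omega>" for \<omega> using inC1 unfolding XXe by simp
      moreover have "restrict \<omega> C1 \<in> space ?P1" for \<omega> by (simp add: space_PiM)
      ultimately show ?thesis by auto
    qed
    also have "\<dots> \<in> sets (vimage_algebra UNIV ?Z1 ?P1)"
    proof -
      have "XX s -` A \<inter> space ?P1 \<in> sets ?P1" by (rule measurable_sets[OF XXm]) simp
      then show ?thesis unfolding sets_vimage_algebra2[OF Z1s] by blast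
    qed
    finally show "XX s -` A \<inter> space MM \<in> sets (vimage_algebra UNIV ?Z1 ?P1)" .
  qed
  have keq: "(\<lambda>\<omega>. \<Prod>s\<in>C2. of_bool (\<omega> s) :: real) = k" by (simp add: k_def fun_eq_iff)
  show ?thesis unfolding keq
  proof (rule real_cond_exp_charact)
    fix A assume A: "A \<in> sets (FF I)"
    then have AM: "A \<in> sets MM" using subalg_FF[of I] unfolding subalgebra_def by auto
    have "A \<in> sets (vimage_algebra UNIV ?Z1 ?P1)"
      using A sets.sigma_sets_subset[OF gens] unfolding sets_FF space_vimage_algebra by blast
    then obtain A' where A': "A' \<in> sets ?P1" "A = ?Z1 -` A' \<inter> UNIV"
      unfolding sets_vimage_algebra2[OF Z1s] by blast
    have iA: "indicator A \<omega> = indicator A' (?Z1 \<omega>)" for \<omega> :: "nat set \<Rightarrow> bool"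
      using A'(2) by (simp add: indicator_def)
    have ind2: "P.indep_var borel (indicator A' \<circ> ?Z1) borel (k \<circ> ?Z2)"
      by (rule P.indep_var_compose[OF ind]) (auto simp: km2 intro: borel_measurable_indicator[OF A'(1)])
    have int1: "integrable MM (indicator A' \<circ> ?Z1 :: _ \<Rightarrow> real)"
      using iA AM by (simp add: comp_def iA[symmetric] integrable_indicator_iff P.emeasure_eq_measure)
    have int2: "integrable MM (k \<circ> ?Z2)" using kint kZ by (simp add: comp_def)
    have "(\<integral>x\<in>A. k x \<partial>MM) = (\<integral>x. (indicator A' \<circ> ?Z1) x * (k \<circ> ?Z2) x \<partial>MM)"
      unfolding set_lebesgue_integral_def by (simp add: iA kZ)
    also have "\<dots> = (\<integral>x. (indicator A' \<circ> ?Z1) x \<partial>MM) * (\<integral>x. (k \<circ> ?Z2) x \<partial>MM)"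
      by (rule P.indep_var_lebesgue_integral[OF ind2 int1 int2])
    also have "\<dots> = measure MM A * (1/2)^card C2"
      using Ek AM by (simp add: comp_def kZ iA[symmetric])
    also have "\<dots> = (\<integral>x\<in>A. (1/2::real)^card C2 \<partial>MM)"
      using AM by (simp add: set_integral_const P.emeasure_eq_measure)
    finally show "(\<integral>x\<in>A. k x \<partial>MM) = (\<integral>x\<in>A. (1/2::real)^card C2 \<partial>MM)" .
  next
    show "integrable MM k" by (rule kint)
  qed (auto)
qed




definition B0 :: "nat set set" where "B0 = {{1,3},{1,4},{2,3},{2,4}}"
definition a0 :: "nat set set \<Rightarrow> real" where "a0 G = (if G = B0 then 1 else 0)"

lemma box2_eq: assumes "a < b" "b < c" "c < (d::nat)"
  shows "box2 {a,b} {c,d} = {{a,c},{a,d},{b,c},{b,d}}"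
proof
  show "{{a,c},{a,d},{b,c},{b,d}} \<subseteq> box2 {a,b} {c,d}"
    using assms unfolding box2_def binom_def by auto
next
  show "box2 {a,b} {c,d} \<subseteq> {{a,c},{a,d},{b,c},{b,d}}"
  proof
    fix s assume s: "s \<in> box2 {a,b} {c,d}"
    then have sb: "s \<in> binom UNIV 2" and c1: "card (s \<inter> {a,b}) = 1" and c2: "card (s \<inter> {c,d}) = 1"
      unfolding box2_def by auto
    obtain x y where xy: "x < y" "s = {x,y}" using binom2_E[OF sb] by blast
    obtain p where p: "s \<inter> {a,b} = {p}" using c1 card_1_singletonE by blast
    obtain q where q: "s \<inter> {c,d} = {q}" using c2 card_1_singletonE by blast
    have pq: "p \<in> {a,b}" "q \<in> {c,d}" "p \<in> s" "q \<in> s" using p q by auto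
    have "p \<noteq> q" using pq assms by auto
    then have "s = {p,q}" using pq xy by auto
    then show "s \<in> {{a,c},{a,d},{b,c},{b,d}}" using pq by auto
  qed
qed

lemma B0_box: "is_box2 B0"
  unfolding is_box2_def
  by (rule exI[of _ "{1,2}"], rule exI[of _ "{3,4}"]) (simp add: box2_eq B0_def)

lemma B0_card: "card B0 = 4"
  unfolding B0_def by (simp add: doubleton_eq_iff)

lemma B0_in: "n \<ge> 4 \<Longrightarrow> B0 \<in> binom (binom {1..n} 2) 4"
  using B0_card unfolding binom_def B0_def by auto

lemma fin_bb: "finite (binom (binom {1..(n::nat)} 2) 4)"
proof -
  have "binom (binom {1..n} 2) 4 \<subseteq> Pow (Pow {1..n})" unfolding binom_def by auto
  then show ?thesis by (rule finite_subset) simp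
qed

lemma tm: "n \<ge> 4 \<Longrightarrow> tmpoly4 n c a0 x = c + (\<Prod>s\<in>B0. x s)"
proof -
  assume n: "n \<ge> 4"
  have "(\<Sum>G\<in>binom (binom {1..n} 2) 4. a0 G * (\<Prod>s\<in>G. x s)) = (\<Sum>G\<in>binom (binom {1..n} 2) 4. if G = B0 then (\<Prod>s\<in>G. x s) else 0)"
    by (rule sum.cong) (auto simp: a0_def)
  also have "\<dots> = (\<Prod>s\<in>B0. x s)" using B0_in[OF n] fin_bb by (simp add: sum.delta')
  finally show ?thesis unfolding tmpoly4_def by simp
qed

lemma deg: "n \<ge> 4 \<Longrightarrow> has_degree4 n a0"
  unfolding has_degree4_def using B0_in by (auto simp: a0_def)

lemma XX_nocoin: "\<not> \<omega> {} \<Longrightarrow> (u::nat) \<noteq> v \<Longrightarrow> XX {u,v} \<omega> = (\<omega> {u} \<noteq> \<omega> {v})"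
  by (cases "u < v") (auto simp: XX_def insert_commute)

lemma XX_coin: "\<omega> {} \<Longrightarrow> XX s \<omega> = \<omega> s" by (simp add: XX_def)

lemma ofb_F: "s \<in> binom I 2 \<Longrightarrow> (\<lambda>\<omega>. of_bool (XX s \<omega>) :: real) \<in> borel_measurable (FF I)"
  by (rule measurable_compose[OF XX_meas_F]) simp_all

lemma prod_ofb: "finite S \<Longrightarrow> (\<Prod>s\<in>S. of_bool (P s) :: real) = of_bool (\<forall>s\<in>S. P s)"
  by (induction S rule: finite_induct) auto

lemma bound: "m \<le> 4 \<Longrightarrow> (1/2::real)^11 \<le> \<bar>of_bool b * (1/2)^m - 3/32\<bar>"
proof -
  assume "m \<le> 4"
  then have "m = 0 \<or> m = 1 \<or> m = 2 \<or> m = 3 \<or> m = 4" by auto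
  then show ?thesis by (cases b) (auto simp: power_divide)
qed

lemma part5:
  assumes n: "n \<ge> 8" and I: "I \<subseteq> {1..n}" "card I \<ge> 8"
  shows "measure MM {\<omega> \<in> space MM.
                 \<bar>real_cond_exp MM (gen_sigma MM XX I)
                    (\<lambda>\<omega>. tmpoly4 n (-3/32) a0 (\<lambda>s. of_bool (XX s \<omega>))) \<omega>\<bar> \<ge> (1/2) ^ 11}
              \<ge> (1/2) ^ 11"
proof -
  interpret sigma_finite_subalgebra MM "FF I" by (rule sfs)
  interpret P: prob_space MM by (rule probM)
  define f where "f \<omega> = -3/32 + (\<Prod>s\<in>B0. of_bool (XX s \<omega>) :: real)" for \<omega>
  have feq: "(\<lambda>\<omega>. tmpoly4 n (-3/32) a0 (\<lambda>s. of_bool (XX s \<omega>))) = f"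
    using n by (simp add: tm f_def fun_eq_iff)
  have "3 \<le> card I" using I(2) by simp
  then obtain T where T: "T \<subseteq> I" "card T = 3" "finite T" by (rule obtain_subset_with_card_n)
  then obtain p q r where pqr: "T = {p,q,r}" "p \<noteq> q" "q \<noteq> r" "p \<noteq> r" by (auto simp: card_3_iff)
  have inI: "p \<in> I" "q \<in> I" "r \<in> I" using T pqr by auto
  have e_in: "{p,q} \<in> binom I 2" "{q,r} \<in> binom I 2" "{p,r} \<in> binom I 2"
    using inI pqr unfolding binom_def by auto
  define E where "E = {\<omega>. XX {p,q} \<omega> \<and> XX {q,r} \<omega> \<and> XX {p,r} \<omega>}"
  define ind where "ind \<omega> = of_bool (XX {p,q} \<omega>) * of_bool (XX {q,r} \<omega>) * (of_bool (XX {p,r} \<omega>) :: real)" for \<omega>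
  have onE: "\<omega> {}" if "\<omega> \<in> E" for \<omega>
  proof (rule ccontr)
    assume "\<not> \<omega> {}"
    then show False using that pqr unfolding E_def by (auto simp: XX_nocoin)
  qed
  have ind01: "ind \<omega> = of_bool (\<omega> \<in> E)" for \<omega> unfolding ind_def E_def by simp
  define Cb where "Cb = B0 \<inter> binom I 2"
  define C2 where "C2 = B0 - binom I 2"
  define h where "h \<omega> = (\<Prod>s\<in>Cb. of_bool (XX s \<omega>) :: real)" for \<omega>
  define k where "k = (\<lambda>\<omega>. \<Prod>s\<in>C2. of_bool (\<omega> s) :: real)"
  have finB0: "finite B0" unfolding B0_def by simp
  have fC2: "finite C2" unfolding C2_def using finB0 by simp
  have C2b: "C2 \<subseteq> binom UNIV 2" unfolding C2_def B0_def binom_def by auto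
  have pw: "ind \<omega> * f \<omega> = (ind \<omega> * h \<omega>) * k \<omega> - 3/32 * ind \<omega>" for \<omega>
  proof (cases "\<omega> \<in> E")
    case True
    then have c: "\<omega> {}" by (rule onE)
    have "(\<Prod>s\<in>B0. of_bool (XX s \<omega>) :: real) = (\<Prod>s\<in>Cb. of_bool (XX s \<omega>)) * (\<Prod>s\<in>C2. of_bool (XX s \<omega>))"
      unfolding Cb_def C2_def by (rule prod.Int_Diff[OF finB0])
    also have "(\<Prod>s\<in>C2. of_bool (XX s \<omega>) :: real) = k \<omega>" unfolding k_def by (simp add: XX_coin[of \<omega>, OF c])
    finally show ?thesis unfolding f_def h_def by (simp add: algebra_simps)
  next
    case False then show ?thesis by (simp add: ind01)
  qed
  note ofbF = ofb_F[OF e_in(1)] ofb_F[OF e_in(2)] ofb_F[OF e_in(3)]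
  have indF: "ind \<in> borel_measurable (FF I)" unfolding ind_def using ofbF by measurable
  have hF: "h \<in> borel_measurable (FF I)" unfolding h_def
    by (rule borel_measurable_prod) (rule ofb_F, auto simp: Cb_def)
  have indM: "ind \<in> borel_measurable MM" unfolding ind_def by measurable
  have hM: "h \<in> borel_measurable MM" unfolding h_def by measurable
  have kM: "k \<in> borel_measurable MM" unfolding k_def by measurable
  have fM: "f \<in> borel_measurable MM" unfolding f_def by measurable
  have b_ind: "\<bar>ind \<omega>\<bar> \<le> 1" for \<omega> unfolding ind_def by simp
  have b_h: "\<bar>h \<omega>\<bar> \<le> 1" for \<omega> unfolding h_def by (simp add: prod_le_1 abs_prod)
  have b_k: "\<bar>k \<omega>\<bar> \<le> 1" for \<omega> unfolding k_def by (simp add: prod_le_1 abs_prod)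
  have b_f: "\<bar>f \<omega>\<bar> \<le> 1" for \<omega>
  proof -
    have "0 \<le> (\<Prod>s\<in>B0. of_bool (XX s \<omega>) :: real)" "(\<Prod>s\<in>B0. of_bool (XX s \<omega>) :: real) \<le> 1"
      by (simp_all add: prod_le_1 prod_nonneg)
    then show ?thesis unfolding f_def by linarith
  qed
  have i1: "integrable MM (\<lambda>\<omega>. ind \<omega> * f \<omega>)"
    by (rule intg[where B=1]) (use indM fM in measurable, simp add: abs_mult mult_le_one b_ind b_f)
  have i2: "integrable MM (\<lambda>\<omega>. (ind \<omega> * h \<omega>) * k \<omega>)"
    by (rule intg[where B=1]) (use indM hM kM in measurable, simp add: abs_mult mult_le_one b_ind b_h b_k)
  have i3: "integrable MM (\<lambda>\<omega>. 3/32 * ind \<omega>)"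
  proof (rule intg[where B=1])
    show "(\<lambda>\<omega>. 3/32 * ind \<omega>) \<in> borel_measurable MM" using indM by measurable
    fix \<omega> show "\<bar>3/32 * ind \<omega>\<bar> \<le> (1::real)" unfolding abs_mult using b_ind[of \<omega>] by linarith
  qed
  have fi: "integrable MM f" by (rule intg[OF fM b_f])
  have ki: "integrable MM k" by (rule intg[OF kM b_k])
  have c1: "AE \<omega> in MM. real_cond_exp MM (FF I) (\<lambda>\<omega>. ind \<omega> * f \<omega>) \<omega> = ind \<omega> * real_cond_exp MM (FF I) f \<omega>"
    by (rule real_cond_exp_mult[OF indF fM i1])
  have ceq: "(\<lambda>\<omega>. ind \<omega> * f \<omega>) = (\<lambda>\<omega>. (ind \<omega> * h \<omega>) * k \<omega> - 3/32 * ind \<omega>)" by (simp add: pw)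
  have c2: "AE \<omega> in MM. real_cond_exp MM (FF I) (\<lambda>\<omega>. (ind \<omega> * h \<omega>) * k \<omega> - 3/32 * ind \<omega>) \<omega> =
      real_cond_exp MM (FF I) (\<lambda>\<omega>. (ind \<omega> * h \<omega>) * k \<omega>) \<omega> - real_cond_exp MM (FF I) (\<lambda>\<omega>. 3/32 * ind \<omega>) \<omega>"
    by (rule real_cond_exp_diff[OF i2 i3])
  have c3: "AE \<omega> in MM. real_cond_exp MM (FF I) (\<lambda>\<omega>. (ind \<omega> * h \<omega>) * k \<omega>) \<omega> = (ind \<omega> * h \<omega>) * real_cond_exp MM (FF I) k \<omega>"
    by (rule real_cond_exp_mult) (use indF hF kM i2 in auto)
  have c4: "AE \<omega> in MM. real_cond_exp MM (FF I) k \<omega> = (1/2)^card C2"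
    unfolding k_def by (rule condk[OF fC2 _ C2b]) (auto simp: C2_def)
  have c5: "AE \<omega> in MM. real_cond_exp MM (FF I) (\<lambda>\<omega>. 3/32 * ind \<omega>) \<omega> = 3/32 * ind \<omega>"
    by (rule real_cond_exp_F_meas[OF i3]) (use indF in measurable)
  have mC2: "card C2 \<le> 4" using B0_card card_mono[OF finB0, of C2] unfolding C2_def by auto
  have fCb: "finite Cb" unfolding Cb_def using finB0 by simp
  define S where "S = {\<omega> \<in> space MM. (1/2::real)^11 \<le> \<bar>real_cond_exp MM (FF I) f \<omega>\<bar>}"
  have SM: "S \<in> sets MM" unfolding S_def
    using borel_measurable_cond_exp[THEN measurable_from_subalg[OF subalg]] by measurable
  have AEs: "AE \<omega> in MM. \<omega> \<in> E \<longrightarrow> \<omega> \<in> S"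
    using c1 c2 c3 c4 c5
  proof eventually_elim
    case (elim \<omega>)
    show ?case
    proof
      assume "\<omega> \<in> E"
      then have i: "ind \<omega> = 1" by (simp add: ind01)
      have "real_cond_exp MM (FF I) f \<omega> = h \<omega> * (1/2)^card C2 - 3/32"
        using elim i unfolding ceq by simp
      moreover have "h \<omega> = of_bool (\<forall>s\<in>Cb. XX s \<omega>)" unfolding h_def using fCb by (rule prod_ofb)
      ultimately show "\<omega> \<in> S" unfolding S_def using bound[OF mC2] by simp
    qed
  qed
  have EM: "E \<in> sets MM"
  proof -
    have "E = {\<omega>\<in>space MM. XX {p,q} \<omega> \<and> XX {q,r} \<omega> \<and> XX {p,r} \<omega>}" by (simp add: E_def)
    also have "\<dots> \<in> sets MM" by measurable
    finally show ?thesis .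
  qed
  have "measure MM E = (1/2)^4"
  proof -
    define J where "J = {{}, {p,q}, {q,r}, {p,r}}"
    have Jc: "card J = 4" unfolding J_def using pqr by (auto simp: doubleton_eq_iff)
    have ie: "indicator E \<omega> = (\<Prod>j\<in>J. of_bool (\<omega> j) :: real)" for \<omega>
    proof (cases "\<omega> {}")
      case True then show ?thesis unfolding J_def E_def using pqr by (auto simp: XX_coin doubleton_eq_iff)
    next
      case False
      then have "\<omega> \<notin> E" using onE by blast
      then show ?thesis using False unfolding J_def by auto
    qed
    have "(\<integral>\<omega>. (\<Prod>j\<in>J. of_bool (\<omega> j)) \<partial>MM) = (\<integral>\<omega>. (indicator E \<omega> :: real) \<partial>MM)"
      by (rule Bochner_Integration.integral_cong[OF refl]) (simp add: ie)
    also have "\<dots> = measure MM E" by simp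
    finally have "measure MM E = (\<integral>\<omega>. (\<Prod>j\<in>J. of_bool (\<omega> j) :: real) \<partial>MM)" by simp
    also have "\<dots> = (1/2)^card J" using L3[of J "\<lambda>_. of_bool"] unfolding J_def by simp
    finally show ?thesis using Jc by simp
  qed
  moreover have "measure MM E \<le> measure MM S"
    by (rule P.finite_measure_mono_AE[OF AEs SM])
  ultimately have "(1/2)^11 \<le> measure MM S" by (simp add: power_divide)
  then show ?thesis unfolding feq S_def FF_def by simp
qed




lemma Ef0: "n \<ge> 8 \<Longrightarrow> prob_space.expectation MM (\<lambda>\<omega>. tmpoly4 n (-3/32) a0 (\<lambda>s. of_bool (XX s \<omega>))) = 0"
proof -
  assume n: "n \<ge> 8"
  interpret P: prob_space MM by (rule probM)
  have fM: "(\<lambda>\<omega>. \<Prod>s\<in>B0. of_bool (XX s \<omega>) :: real) \<in> borel_measurable MM" by measurable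
  have "(\<integral>\<omega>. tmpoly4 n (-3/32) a0 (\<lambda>s. of_bool (XX s \<omega>)) \<partial>MM) = (\<integral>\<omega>. -3/32 + (\<Prod>s\<in>B0. of_bool (XX s \<omega>) :: real) \<partial>MM)"
    using n by (simp add: tm)
  also have "\<dots> = -3/32 + (\<integral>\<omega>. (\<Prod>s\<in>B0. of_bool (XX s \<omega>) :: real) \<partial>MM)"
    by (subst Bochner_Integration.integral_add) (auto intro!: intg[OF fM, where B=1] simp: prod_le_1 abs_prod P.prob_space[simplified])
  also have "\<dots> = 0" using E4[OF B0_box] by (simp add: power_divide)
  finally show ?thesis by simp
qed

theorem propositionA1:
  "\<exists>(M :: (nat set \<Rightarrow> bool) measure) (X :: nat set \<Rightarrow> (nat set \<Rightarrow> bool) \<Rightarrow> bool).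
     prob_space M \<and>
     (\<forall>s\<in>binom UNIV 2. X s \<in> measurable M (count_space UNIV)) \<and>
     exchangeable2 M X \<and>
     (\<forall>s\<in>binom UNIV 2. prob_space.expectation M (\<lambda>\<omega>. of_bool (X s \<omega>) :: real) = 1/2) \<and>
     (\<forall>s\<in>binom UNIV 2. \<forall>t\<in>binom UNIV 2. s \<noteq> t \<longrightarrow>
        prob_space.expectation M (\<lambda>\<omega>. of_bool (X s \<omega>) * of_bool (X t \<omega>) :: real) = 1/4) \<and>
     (\<forall>B G. is_box2 B \<and> G \<subseteq> B \<and> G \<noteq> {} \<and> G \<noteq> B \<longrightarrow>
        prob_space.expectation M (\<lambda>\<omega>. (\<Prod>s\<in>G. of_bool (X s \<omega>)) :: real) = (1/2) ^ card G) \<and>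
     (\<forall>B. is_box2 B \<longrightarrow>
        prob_space.expectation M (\<lambda>\<omega>. (\<Prod>s\<in>B. of_bool (X s \<omega>)) :: real) = 3/2 * (1/2) ^ 4) \<and>
     (\<forall>n::nat. n \<ge> 8 \<longrightarrow>
        (\<exists>c a. has_degree4 n a \<and>
           prob_space.expectation M (\<lambda>\<omega>. tmpoly4 n c a (\<lambda>s. of_bool (X s \<omega>))) = 0 \<and>
           (AE \<omega> in M. \<bar>tmpoly4 n c a (\<lambda>s. of_bool (X s \<omega>))\<bar> \<le> 1) \<and>
           (\<forall>I. I \<subseteq> {1..n} \<and> card I \<ge> 8 \<longrightarrow>
              measure M {\<omega> \<in> space M.
                 \<bar>real_cond_exp M (gen_sigma M X I)
                    (\<lambda>\<omega>. tmpoly4 n c a (\<lambda>s. of_bool (X s \<omega>))) \<omega>\<bar> \<ge> (1/2) ^ 11}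
              \<ge> (1/2) ^ 11)))"
proof (intro exI[of _ MM] exI[of _ XX] conjI ballI allI impI)
  show "prob_space MM" by (rule probM)
  show "XX s \<in> MM \<rightarrow>\<^sub>M count_space UNIV" for s by (rule meas_XX)
  show "exchangeable2 MM XX" by (rule exch)
  show "prob_space.expectation MM (\<lambda>\<omega>. of_bool (XX s \<omega>) :: real) = 1/2" if "s \<in> binom UNIV 2" for s
    using E1[OF that] by simp
  show "prob_space.expectation MM (\<lambda>\<omega>. of_bool (XX s \<omega>) * of_bool (XX t \<omega>) :: real) = 1/4"
    if "s \<in> binom UNIV 2" "t \<in> binom UNIV 2" "s \<noteq> t" for s t
    using E2[OF that] by simp
  show "prob_space.expectation MM (\<lambda>\<omega>. (\<Prod>s\<in>G. of_bool (XX s \<omega>)) :: real) = (1/2) ^ card G"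
    if "is_box2 B \<and> G \<subseteq> B \<and> G \<noteq> {} \<and> G \<noteq> B" for B G
    using E3[of B G] that by simp
  show "prob_space.expectation MM (\<lambda>\<omega>. (\<Prod>s\<in>B. of_bool (XX s \<omega>)) :: real) = 3/2 * (1/2) ^ 4"
    if "is_box2 B" for B
    using E4[OF that] by simp
  fix n :: nat assume n: "8 \<le> n"
  show "\<exists>c a. has_degree4 n a \<and>
           prob_space.expectation MM (\<lambda>\<omega>. tmpoly4 n c a (\<lambda>s. of_bool (XX s \<omega>))) = 0 \<and>
           (AE \<omega> in MM. \<bar>tmpoly4 n c a (\<lambda>s. of_bool (XX s \<omega>))\<bar> \<le> 1) \<and>
           (\<forall>I. I \<subseteq> {1..n} \<and> card I \<ge> 8 \<longrightarrow>
              measure MM {\<omega> \<in> space MM.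
                 \<bar>real_cond_exp MM (gen_sigma MM XX I)
                    (\<lambda>\<omega>. tmpoly4 n c a (\<lambda>s. of_bool (XX s \<omega>))) \<omega>\<bar> \<ge> (1/2) ^ 11}
              \<ge> (1/2) ^ 11)"
  proof (intro exI[of _ "-3/32"] exI[of _ a0] conjI allI impI)
    show "has_degree4 n a0" using n by (intro deg) simp
    show "prob_space.expectation MM (\<lambda>\<omega>. tmpoly4 n (-3/32) a0 (\<lambda>s. of_bool (XX s \<omega>))) = 0"
      using Ef0 n by simp
    show "AE \<omega> in MM. \<bar>tmpoly4 n (-3/32) a0 (\<lambda>s. of_bool (XX s \<omega>))\<bar> \<le> 1"
    proof (rule AE_I2)
      fix \<omega>
      have "0 \<le> (\<Prod>s\<in>B0. of_bool (XX s \<omega>) :: real)" "(\<Prod>s\<in>B0. of_bool (XX s \<omega>) :: real) \<le> 1"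
        by (simp_all add: prod_le_1 prod_nonneg)
      then show "\<bar>tmpoly4 n (-3/32) a0 (\<lambda>s. of_bool (XX s \<omega>))\<bar> \<le> 1" using n by (simp add: tm)
    qed
    fix I assume "I \<subseteq> {1..n} \<and> card I \<ge> 8"
    then show "measure MM {\<omega> \<in> space MM.
                 \<bar>real_cond_exp MM (gen_sigma MM XX I)
                    (\<lambda>\<omega>. tmpoly4 n (-3/32) a0 (\<lambda>s. of_bool (XX s \<omega>))) \<omega>\<bar> \<ge> (1/2) ^ 11}
              \<ge> (1/2) ^ 11"
      using part5[OF n] by blast
  qed
qed



end
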